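(* Let $\mathcal{X}$ be a finite set of prompts, $\mathcal{Y}$ a finite set of outputs, $r:\mathcal{X}\times\mathcal{Y}\to\{0,1\}$ a reward function, and $\pi_\theta$ a tabular policy. Suppose $\theta(t)$, $t\ge 0$, follows the gradient flow $\frac{d}{dt}\theta(t) = \nabla \mathcal{J}_{\mathrm{RL}}(\theta(t))$, where $\mathcal{J}_{\mathrm{RL}}(\theta) = \sum_{x\in\mathcal{X}}\mathbb{E}_{y\sim\pi_\theta(\cdot\mid x)}[r(x,y)]$. Then for any prompt $x \in \mathcal{X}$, any output $y \in \mathcal{Y}$, and any time $T \geq 0$: $$\frac{d}{dt}\pi_{\theta(t)}(y\mid x) = \pi_{\theta(t)}(y\mid x)^2\left[r(x, y) - \mathbb{E}_{y'' \sim \pi_{\theta(t)}(\cdot \mid x)}[r(x, y'')]\right] - \pi_{\theta(t)}(y\mid x)\sum_{y' \in \mathcal{Y}}\pi_{\theta(t)}(y'\mid x)^2\left[r(x, y') - \mathbb{E}_{y'' \sim \pi_{\theta(t)}(\cdot \mid x)}[r(x, y'')]\right],$$ and $$\pi_{\theta(T)}(y\mid x) \leq \pi_{\theta(0)}(y\mid x) \cdot \exp(2T).$$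
   Context: A tabular policy assigns an independent trainable logit $\theta_{y,x}\in\mathbb{R}$ to each pair $(y,x)\in\mathcal{Y}\times\mathcal{X}$, with $\pi_\theta(y\mid x) = \exp(\theta_{y,x})/\sum_{y'\in\mathcal{Y}}\exp(\theta_{y',x})$. *)

theory Defs
  imports "HOL-Analysis.Analysis"
begin

definition tab_pi :: "real ^ ('y::finite \<times> 'x::finite) \<Rightarrow> 'y \<Rightarrow> 'x \<Rightarrow> real" where
  "tab_pi \<theta> y x = exp (\<theta> $ (y, x)) / (\<Sum>y'\<in>UNIV. exp (\<theta> $ (y', x)))"

definition exp_reward :: "real ^ ('y::finite \<times> 'x::finite) \<Rightarrow> ('x \<Rightarrow> 'y \<Rightarrow> real) \<Rightarrow> 'x \<Rightarrow> real" where
  "exp_reward \<theta> r x = (\<Sum>y\<in>UNIV. tab_pi \<theta> y x * r x y)"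

definition J_RL :: "('x::finite \<Rightarrow> 'y::finite \<Rightarrow> real) \<Rightarrow> real ^ ('y \<times> 'x) \<Rightarrow> real" where
  "J_RL r \<theta> = (\<Sum>x\<in>UNIV. exp_reward \<theta> r x)"

end

theory Submission
  imports Defs
begin


lemma comp_deriv:
  fixes \<phi> :: "real \<Rightarrow> real ^ 'n::finite"
  assumes "(\<phi> has_vector_derivative D) (at t within S)"
  shows "((\<lambda>s. \<phi> s $ i) has_real_derivative D $ i) (at t within S)"
proof -
  have "((\<lambda>s. \<phi> s $ i) has_derivative (\<lambda>s. (s *\<^sub>R D) $ i)) (at t within S)"
    using bounded_linear.has_derivative[OF bounded_linear_vec_nth assms[unfolded has_vector_derivative_def]] .
  moreover have "(\<lambda>s. (s *\<^sub>R D) $ i) = (*) (D $ i)" by (auto simp: mult.commute)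
  ultimately show ?thesis by (simp add: has_field_derivative_def)
qed

lemma pi_pos: "tab_pi \<theta> y x > 0"
  unfolding tab_pi_def by (auto intro!: divide_pos_pos sum_pos)

lemma pi_sum: "(\<Sum>y\<in>UNIV. tab_pi \<theta> y x) = 1"
proof -
  have "(\<Sum>y'\<in>UNIV. exp (\<theta> $ (y', x))) > 0" by (auto intro!: sum_pos)
  then show ?thesis unfolding tab_pi_def by (simp add: sum_divide_distrib[symmetric])
qed

lemma pi_deriv:
  fixes \<phi> :: "real \<Rightarrow> real ^ ('y::finite \<times> 'x::finite)"
  assumes "\<And>i. ((\<lambda>s. \<phi> s $ i) has_real_derivative D $ i) (at t within S)"
  shows "((\<lambda>s. tab_pi (\<phi> s) y x) has_real_derivative
     tab_pi (\<phi> t) y x * D $ (y,x) - tab_pi (\<phi> t) y x * (\<Sum>y'\<in>UNIV. tab_pi (\<phi> t) y' x * D $ (y',x))) (at t within S)"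
proof -
  define Sm where "Sm = (\<Sum>y'\<in>UNIV. exp (\<phi> t $ (y', x)))"
  have Sp: "Sm > 0" unfolding Sm_def by (auto intro!: sum_pos)
  have e: "((\<lambda>s. exp (\<phi> s $ (y,x))) has_real_derivative exp (\<phi> t $ (y,x)) * D $ (y,x)) (at t within S)"
    using DERIV_chain2[OF DERIV_exp assms] by simp
  have s: "((\<lambda>s. \<Sum>y'\<in>UNIV. exp (\<phi> s $ (y',x))) has_real_derivative (\<Sum>y'\<in>UNIV. exp (\<phi> t $ (y',x)) * D $ (y',x))) (at t within S)"
    by (rule DERIV_sum) (use DERIV_chain2[OF DERIV_exp assms] in simp)
  have q: "((\<lambda>s. tab_pi (\<phi> s) y x) has_real_derivative
     (exp (\<phi> t $ (y,x)) * D $ (y,x) * Sm - exp (\<phi> t $ (y,x)) * (\<Sum>y'\<in>UNIV. exp (\<phi> t $ (y',x)) * D $ (y',x))) / (Sm * Sm)) (at t within S)"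
    unfolding tab_pi_def using DERIV_divide[OF e s] Sp by (simp add: Sm_def)
  have "(exp (\<phi> t $ (y,x)) * D $ (y,x) * Sm - exp (\<phi> t $ (y,x)) * (\<Sum>y'\<in>UNIV. exp (\<phi> t $ (y',x)) * D $ (y',x))) / (Sm * Sm)
     = tab_pi (\<phi> t) y x * D $ (y,x) - tab_pi (\<phi> t) y x * (\<Sum>y'\<in>UNIV. tab_pi (\<phi> t) y' x * D $ (y',x))"
    using Sp unfolding tab_pi_def Sm_def[symmetric]
    by (simp add: field_simps sum_divide_distrib[symmetric] power2_eq_square)
  with q show ?thesis by simp
qed


lemma grad_eq:
  fixes r :: "'x::finite \<Rightarrow> 'y::finite \<Rightarrow> real" and \<theta> :: "real ^ ('y \<times> 'x)"
  assumes "(J_RL r has_derivative (\<lambda>h. G \<bullet> h)) (at \<theta>)"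
  shows "G $ (y0,x0) = tab_pi \<theta> y0 x0 * (r x0 y0 - exp_reward \<theta> r x0)"
proof -
  define a :: "real ^ ('y \<times> 'x)" where "a = axis (y0,x0) 1"
  define \<phi> where "\<phi> = (\<lambda>s::real. \<theta> + s *\<^sub>R a)"
  have c: "((\<lambda>s. \<phi> s $ j) has_real_derivative a $ j) (at 0)" for j
    unfolding \<phi>_def by (auto intro!: derivative_eq_intros)
  have p: "((\<lambda>s. tab_pi (\<phi> s) y x) has_real_derivative
     tab_pi \<theta> y x * a $ (y,x) - tab_pi \<theta> y x * (\<Sum>y'\<in>UNIV. tab_pi \<theta> y' x * a $ (y',x))) (at 0)" for y x
    using pi_deriv[OF c, of y x] by (simp add: \<phi>_def)
  have d1: "((\<lambda>s. J_RL r (\<phi> s)) has_real_derivative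
     (\<Sum>x\<in>UNIV. \<Sum>y\<in>UNIV. (tab_pi \<theta> y x * a $ (y,x) - tab_pi \<theta> y x * (\<Sum>y'\<in>UNIV. tab_pi \<theta> y' x * a $ (y',x))) * r x y)) (at 0)"
    unfolding J_RL_def exp_reward_def
    by (intro DERIV_sum DERIV_cmult_right p)
  have h1: "(\<phi> has_derivative (\<lambda>s. s *\<^sub>R a)) (at 0)"
    unfolding \<phi>_def by (auto intro!: derivative_eq_intros)
  have "\<phi> 0 = \<theta>" by (simp add: \<phi>_def)
  then have h2: "(J_RL r has_derivative (\<lambda>h. G \<bullet> h)) (at (\<phi> 0))" using assms by simp
  have "((\<lambda>s. J_RL r (\<phi> s)) has_derivative (\<lambda>s. G \<bullet> (s *\<^sub>R a))) (at 0)"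
    by (rule has_derivative_compose[OF h1 h2])
  moreover have "(\<lambda>s. G \<bullet> (s *\<^sub>R a)) = (*) (G $ (y0,x0))"
    by (auto simp: a_def inner_axis mult.commute)
  ultimately have d2: "((\<lambda>s. J_RL r (\<phi> s)) has_real_derivative G $ (y0,x0)) (at 0)"
    by (simp add: has_field_derivative_def)
  have sd: "(\<Sum>y'\<in>UNIV. tab_pi \<theta> y' x0 * (if y' = y0 then 1 else 0)) = tab_pi \<theta> y0 x0"
    by (simp add: if_distrib[of "(*) _"] cong: if_cong)
  have "G $ (y0,x0) = (\<Sum>x\<in>UNIV. \<Sum>y\<in>UNIV. (tab_pi \<theta> y x * a $ (y,x) - tab_pi \<theta> y x * (\<Sum>y'\<in>UNIV. tab_pi \<theta> y' x * a $ (y',x))) * r x y)"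
    using DERIV_unique[OF d2 d1] .
  also have "\<dots> = (\<Sum>x\<in>UNIV. if x = x0 then (\<Sum>y\<in>UNIV. (tab_pi \<theta> y x0 * (if y = y0 then 1 else 0) - tab_pi \<theta> y x0 * tab_pi \<theta> y0 x0) * r x0 y) else 0)"
    using sd by (intro sum.cong refl) (auto simp: a_def axis_def)
  also have "\<dots> = (\<Sum>y\<in>UNIV. (tab_pi \<theta> y x0 * (if y = y0 then 1 else 0) - tab_pi \<theta> y x0 * tab_pi \<theta> y0 x0) * r x0 y)"
    by simp
  also have "\<dots> = (\<Sum>y\<in>UNIV. tab_pi \<theta> y x0 * (if y = y0 then 1 else 0) * r x0 y) - (\<Sum>y\<in>UNIV. tab_pi \<theta> y x0 * tab_pi \<theta> y0 x0 * r x0 y)"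
    by (simp add: left_diff_distrib sum_subtractf)
  also have "\<dots> = tab_pi \<theta> y0 x0 * r x0 y0 - tab_pi \<theta> y0 x0 * (\<Sum>y\<in>UNIV. tab_pi \<theta> y x0 * r x0 y)"
  proof -
    have "(\<Sum>y\<in>UNIV. tab_pi \<theta> y x0 * (if y = y0 then 1 else 0) * r x0 y) = (\<Sum>y\<in>UNIV. if y = y0 then tab_pi \<theta> y0 x0 * r x0 y0 else 0)"
      by (intro sum.cong) auto
    moreover have "(\<Sum>y\<in>UNIV. tab_pi \<theta> y x0 * tab_pi \<theta> y0 x0 * r x0 y) = tab_pi \<theta> y0 x0 * (\<Sum>y\<in>UNIV. tab_pi \<theta> y x0 * r x0 y)"
      by (simp add: sum_distrib_left mult_ac)
    ultimately show ?thesis by simp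
  qed
  also have "\<dots> = tab_pi \<theta> y0 x0 * (r x0 y0 - exp_reward \<theta> r x0)"
    by (simp add: exp_reward_def right_diff_distrib)
  finally show ?thesis .
qed


lemma pi_le1: "tab_pi \<theta> y x \<le> 1"
proof -
  have "tab_pi \<theta> y x \<le> (\<Sum>y\<in>UNIV. tab_pi \<theta> y x)"
    by (rule member_le_sum) (auto intro: less_imp_le pi_pos)
  then show ?thesis by (simp add: pi_sum)
qed

lemma E_bounds:
  assumes "\<And>x y. r x y \<in> {0, 1}"
  shows "0 \<le> exp_reward \<theta> r x \<and> exp_reward \<theta> r x \<le> 1"
proof
  have r01: "0 \<le> r x y \<and> r x y \<le> 1" for y using assms[of x y] by auto
  show "0 \<le> exp_reward \<theta> r x" unfolding exp_reward_def
    using r01 by (intro sum_nonneg mult_nonneg_nonneg less_imp_le[OF pi_pos]) auto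
  have "exp_reward \<theta> r x \<le> (\<Sum>y\<in>UNIV. tab_pi \<theta> y x)" unfolding exp_reward_def
    using r01 by (intro sum_mono mult_left_le less_imp_le[OF pi_pos]) auto
  then show "exp_reward \<theta> r x \<le> 1" by (simp add: pi_sum)
qed

lemma deriv_bound:
  assumes "\<And>x y. r x y \<in> {0, 1}"
  shows "(tab_pi \<theta> y x)\<^sup>2 * (r x y - exp_reward \<theta> r x)
        - tab_pi \<theta> y x * (\<Sum>y'\<in>UNIV. (tab_pi \<theta> y' x)\<^sup>2 * (r x y' - exp_reward \<theta> r x))
        \<le> 2 * tab_pi \<theta> y x"
proof -
  let ?E = "exp_reward \<theta> r x"
  have ab: "\<bar>r x z - ?E\<bar> \<le> 1" for z using E_bounds[OF assms, where \<theta>=\<theta> and x=x] assms[of x z] by auto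
  have sq: "(tab_pi \<theta> z x)\<^sup>2 \<le> tab_pi \<theta> z x" for z
    using pi_le1[of \<theta> z x] pi_pos[of \<theta> z x] by (simp add: power2_eq_square mult_left_le)
  have t: "c * d \<le> e" if "0 \<le> c" "c \<le> e" "\<bar>d\<bar> \<le> 1" for c d e :: real
  proof -
    have "c * d \<le> c * \<bar>d\<bar>" using that by (simp add: mult_left_mono)
    also have "\<dots> \<le> c" using that mult_left_le by blast
    finally show ?thesis using that by simp
  qed
  have 1: "(tab_pi \<theta> y x)\<^sup>2 * (r x y - ?E) \<le> tab_pi \<theta> y x"
    by (rule t) (use sq ab in auto)
  have "- (\<Sum>y'\<in>UNIV. (tab_pi \<theta> y' x)\<^sup>2 * (r x y' - ?E)) = (\<Sum>y'\<in>UNIV. (tab_pi \<theta> y' x)\<^sup>2 * -(r x y' - ?E))"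
    by (simp add: sum_negf[symmetric] algebra_simps)
  also have "\<dots> \<le> (\<Sum>y'\<in>UNIV. tab_pi \<theta> y' x)"
    by (intro sum_mono t) (use sq ab in \<open>auto simp: abs_minus_commute\<close>)
  finally have 2: "- (\<Sum>y'\<in>UNIV. (tab_pi \<theta> y' x)\<^sup>2 * (r x y' - ?E)) \<le> 1" by (simp add: pi_sum)
  have "tab_pi \<theta> y x * - (\<Sum>y'\<in>UNIV. (tab_pi \<theta> y' x)\<^sup>2 * (r x y' - ?E)) \<le> tab_pi \<theta> y x * 1"
    using 2 pi_pos[of \<theta> y x] by (intro mult_left_mono) auto
  with 1 show ?thesis by simp
qed


theorem lemma2:
  fixes r :: "'x::finite \<Rightarrow> 'y::finite \<Rightarrow> real"
    and \<theta> :: "real \<Rightarrow> real ^ ('y \<times> 'x)"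
    and G :: "real \<Rightarrow> real ^ ('y \<times> 'x)"
  assumes reward01: "\<And>x y. r x y \<in> {0, 1}"
    and gradient: "\<And>t. t \<ge> 0 \<Longrightarrow> (J_RL r has_derivative (\<lambda>h. G t \<bullet> h)) (at (\<theta> t))"
    and flow: "\<And>t. t \<ge> 0 \<Longrightarrow> (\<theta> has_vector_derivative G t) (at t within {0..})"
  shows "\<forall>x y. \<forall>T\<ge>0.
           ((\<lambda>t. tab_pi (\<theta> t) y x) has_real_derivative
              (tab_pi (\<theta> T) y x)\<^sup>2 * (r x y - exp_reward (\<theta> T) r x)
              - tab_pi (\<theta> T) y x *
                (\<Sum>y'\<in>UNIV. (tab_pi (\<theta> T) y' x)\<^sup>2 * (r x y' - exp_reward (\<theta> T) r x)))
             (at T within {0..})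
         \<and> tab_pi (\<theta> T) y x \<le> tab_pi (\<theta> 0) y x * exp (2 * T)"
proof -
  define D where "D = (\<lambda>y x T. (tab_pi (\<theta> T) y x)\<^sup>2 * (r x y - exp_reward (\<theta> T) r x)
              - tab_pi (\<theta> T) y x *
                (\<Sum>y'\<in>UNIV. (tab_pi (\<theta> T) y' x)\<^sup>2 * (r x y' - exp_reward (\<theta> T) r x)))"
  have der: "((\<lambda>t. tab_pi (\<theta> t) y x) has_real_derivative D y x T) (at T within {0..})"
    if T: "T \<ge> 0" for x y T
  proof -
    have g: "G T $ (y', x) = tab_pi (\<theta> T) y' x * (r x y' - exp_reward (\<theta> T) r x)" for y'
      by (rule grad_eq[OF gradient[OF T]])
    have "((\<lambda>t. tab_pi (\<theta> t) y x) has_real_derivative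
     tab_pi (\<theta> T) y x * G T $ (y,x) - tab_pi (\<theta> T) y x * (\<Sum>y'\<in>UNIV. tab_pi (\<theta> T) y' x * G T $ (y',x))) (at T within {0..})"
      by (rule pi_deriv) (rule comp_deriv[OF flow[OF T]])
    moreover have "tab_pi (\<theta> T) y x * G T $ (y,x) - tab_pi (\<theta> T) y x * (\<Sum>y'\<in>UNIV. tab_pi (\<theta> T) y' x * G T $ (y',x)) = D y x T"
      unfolding D_def g by (simp add: power2_eq_square mult_ac)
    ultimately show ?thesis by simp
  qed
  have bnd: "tab_pi (\<theta> T) y x \<le> tab_pi (\<theta> 0) y x * exp (2 * T)" if T: "T \<ge> 0" for x y T
  proof -
    define f where "f = (\<lambda>t. tab_pi (\<theta> t) y x * exp (- (2 * t)))"
    define v where "v = (\<lambda>t. (D y x t - 2 * tab_pi (\<theta> t) y x) * exp (- (2 * t)))"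
    have fd: "(f has_real_derivative v t) (at t within {0..})" if t: "t \<ge> 0" for t
    proof -
      have e: "((\<lambda>t. exp (- (2 * t))) has_real_derivative exp (- (2 * t)) * (- 2)) (at t within {0..})"
        by (auto intro!: derivative_eq_intros)
      show ?thesis unfolding f_def
        by (rule DERIV_cong[OF DERIV_mult[OF der[OF t] e]]) (simp add: v_def algebra_simps)
    qed
    have "\<exists>z\<in>{0..T}. f T - f 0 = (\<lambda>h. h * v z) (T - 0)"
    proof (rule mvt_very_simple[OF T])
      fix t assume "0 \<le> t" "t \<le> T"
      then have "(f has_derivative (*) (v t)) (at t within {0..T})"
        using fd[of t] by (auto simp: has_field_derivative_def intro: has_derivative_subset)
      moreover have "(*) (v t) = (\<lambda>h. h * v t)" by (auto simp: mult.commute)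
      ultimately show "(f has_derivative (\<lambda>h. h * v t)) (at t within {0..T})" by simp
    qed
    then obtain z where z: "z \<in> {0..T}" "f T - f 0 = T * v z" by auto
    have "v z \<le> 0" unfolding v_def D_def
      using deriv_bound[OF reward01, of "\<theta> z" y x] by (intro mult_nonpos_nonneg) auto
    with z T have "T * v z \<le> 0" by (simp add: mult_nonneg_nonpos)
    with z have "f T \<le> f 0" by linarith
    then have "tab_pi (\<theta> T) y x * exp (- (2 * T)) * exp (2 * T) \<le> tab_pi (\<theta> 0) y x * exp (2 * T)"
      unfolding f_def by simp
    then show ?thesis by (simp add: mult.assoc exp_minus field_simps)
  qed
  show ?thesis using der bnd unfolding D_def by blast
qed

end
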